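(* The commutator of $B$ and $B^\dagger$ satisfies $$[B,B^\dagger]=2^{-1}\sum_{w\in W^\star}|0,w\rangle\langle 0,w|,$$ where $|0,w\rangle\langle0,w|$ denotes the operator $\phi\mapsto\langle\phi,|0,w\rangle\rangle\,|0,w\rangle$ and the sum converges strongly; equivalently, $[B,B^\dagger]$ is one half of the orthogonal projection onto the kernel of $L$.
   Context: $\Omega=\{0,1\}^{\mathbb N}$ with the shift $\sigma$; for $a\in\{0,1\}$, $ax=(a,x_1,\dots)$. $\mu$ is the measure of maximal entropy (uniform Bernoulli product measure), $L^2(\mu)$ the Hilbert space of square-integrable functions with inner product $\langle\cdot,\cdot\rangle$. Ruelle operator $L\phi(x)=\frac12(\phi(0x)+\phi(1x))$; Koopman operator $K\phi=\phi\circ\sigma$; $B=2^{-1/2}L$, $B^\dagger=2^{-1/2}K$, $[X,Y]=XY-YX$. $W$ is the set of finite words over $\{0,1\}$ (including the empty word $\varepsilon$), $\ell(v)$ the length, $uv$ concatenation, $[v]$ the cylinder of sequences starting with $v$, $\chi_{[v]}$ its indicator. For nonempty $v$, $e_v=2^{\ell(v)/2}(\chi_{[v1]}-\chi_{[v0]})$; $e^0_\varepsilon=-2^{1/2}\chi_{[0]}$, $e^1_\varepsilon=2^{1/2}\chi_{[1]}$. For $w\in W$, $|0,w\rangle=2^{-1/2}(e_{0w}-e_{1w})$; with $W^\star=\{\star\}\cup W$, $|0,\star\rangle=2^{-1/2}(e^0_\varepsilon+e^1_\varepsilon)$. *)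

theory Defs
  imports "HOL-Probability.Probability"
begin

text \<open>Sequences in {0,1}^N are functions nat => bool, with 0 encoded as False and 1 as True.
  Finite words are bool lists.\<close>

type_synonym seq = "nat \<Rightarrow> bool"

definition mu :: "seq measure" where
  "mu = (\<Pi>\<^sub>M i\<in>(UNIV::nat set). measure_pmf (pmf_of_set (UNIV::bool set)))"

definition prepend :: "bool \<Rightarrow> seq \<Rightarrow> seq" where
  "prepend a x = (\<lambda>n. if n = 0 then a else x (n - 1))"

definition shift :: "seq \<Rightarrow> seq" where
  "shift x = (\<lambda>n. x (Suc n))"

definition ruelle :: "(seq \<Rightarrow> complex) \<Rightarrow> seq \<Rightarrow> complex" where
  "ruelle \<phi> x = (\<phi> (prepend False x) + \<phi> (prepend True x)) / 2"

definition koopman :: "(seq \<Rightarrow> complex) \<Rightarrow> seq \<Rightarrow> complex" where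
  "koopman \<phi> = \<phi> \<circ> shift"

definition opB :: "(seq \<Rightarrow> complex) \<Rightarrow> seq \<Rightarrow> complex" where
  "opB \<phi> x = complex_of_real (1 / sqrt 2) * ruelle \<phi> x"

definition opBdag :: "(seq \<Rightarrow> complex) \<Rightarrow> seq \<Rightarrow> complex" where
  "opBdag \<phi> x = complex_of_real (1 / sqrt 2) * koopman \<phi> x"

definition commBBdag :: "(seq \<Rightarrow> complex) \<Rightarrow> seq \<Rightarrow> complex" where
  "commBBdag \<phi> x = opB (opBdag \<phi>) x - opBdag (opB \<phi>) x"

definition L2 :: "(seq \<Rightarrow> complex) set" where
  "L2 = {f. f \<in> borel_measurable mu \<and> integrable mu (\<lambda>x. (cmod (f x))\<^sup>2)}"

definition inner_L2 :: "(seq \<Rightarrow> complex) \<Rightarrow> (seq \<Rightarrow> complex) \<Rightarrow> complex" where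
  "inner_L2 f g = (\<integral>x. f x * cnj (g x) \<partial>mu)"

definition dist_L2_sq :: "(seq \<Rightarrow> complex) \<Rightarrow> (seq \<Rightarrow> complex) \<Rightarrow> real" where
  "dist_L2_sq f g = (\<integral>x. (cmod (f x - g x))\<^sup>2 \<partial>mu)"

definition cyl :: "bool list \<Rightarrow> seq set" where
  "cyl v = {x. \<forall>i<length v. x i = v ! i}"

definition chi :: "bool list \<Rightarrow> seq \<Rightarrow> complex" where
  "chi v = indicator (cyl v)"

definition evec :: "bool list \<Rightarrow> seq \<Rightarrow> complex" where
  "evec v x = complex_of_real (2 powr (real (length v) / 2)) * (chi (v @ [True]) x - chi (v @ [False]) x)"

definition e0eps :: "seq \<Rightarrow> complex" where
  "e0eps x = - complex_of_real (sqrt 2) * chi [False] x"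

definition e1eps :: "seq \<Rightarrow> complex" where
  "e1eps x = complex_of_real (sqrt 2) * chi [True] x"

text \<open>W-star = {star} union W is modelled as bool list option, None being star.\<close>
fun ket0 :: "bool list option \<Rightarrow> seq \<Rightarrow> complex" where
  "ket0 None x = complex_of_real (2 powr (-1/2)) * (e0eps x + e1eps x)"
| "ket0 (Some w) x = complex_of_real (2 powr (-1/2)) * (evec (False # w) x - evec (True # w) x)"

end

theory Submission
  imports Defs
begin


abbreviation "B01 \<equiv> measure_pmf (pmf_of_set (UNIV::bool set))"

interpretation SQ: sequence_space B01
  by unfold_locales

lemma mu_eq: "mu = SQ.S" by (simp add: mu_def)

lemma prepend_case_nat: "prepend a x = case_nat a x"
  by (auto simp: prepend_def fun_eq_iff split: nat.split)

lemma space_mu[simp]: "space mu = UNIV"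
  by (simp add: mu_eq space_PiM)

lemma sets_mu_cong[measurable_cong]: "sets mu = sets SQ.S" by (simp add: mu_eq)

lemma prob_mu: "prob_space mu"
  unfolding mu_eq by (rule SQ.prob_space_axioms)

lemma meas_prepend[measurable]: "prepend a \<in> measurable mu mu"
  unfolding mu_eq prepend_case_nat
  by measurable

lemma meas_shift[measurable]: "shift \<in> measurable mu mu"
  unfolding mu_eq shift_def
  by (rule measurable_PiM_single'[where f="\<lambda>i x. x (Suc i)"]) (auto simp: space_PiM)

lemma nn_split:
  assumes f[measurable]: "f \<in> borel_measurable mu"
  shows "(\<integral>\<^sup>+x. f x \<partial>mu) = ((\<integral>\<^sup>+x. f (prepend False x) \<partial>mu) + (\<integral>\<^sup>+x. f (prepend True x) \<partial>mu)) / 2"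
proof -
  have fS[measurable]: "f \<in> borel_measurable SQ.S" using f by (simp add: mu_eq)
  have "(\<integral>\<^sup>+x. f x \<partial>mu) = (\<integral>\<^sup>+x. f x \<partial>distr (B01 \<Otimes>\<^sub>M SQ.S) SQ.S (\<lambda>(s, \<omega>). case_nat s \<omega>))"
    by (simp add: SQ.PiM_iter mu_eq)
  also have "\<dots> = (\<integral>\<^sup>+x. f (case_nat (fst x) (snd x)) \<partial>(B01 \<Otimes>\<^sub>M SQ.S))"
    by (subst nn_integral_distr) (auto simp: split_beta')
  also have "\<dots> = (\<integral>\<^sup>+s. \<integral>\<^sup>+\<omega>. f (case_nat s \<omega>) \<partial>SQ.S \<partial>B01)"
    by (subst SQ.nn_integral_fst[symmetric]) auto
  also have "\<dots> = ((\<integral>\<^sup>+x. f (prepend False x) \<partial>mu) + (\<integral>\<^sup>+x. f (prepend True x) \<partial>mu)) / 2"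
    by (simp add: nn_integral_pmf_of_set UNIV_bool prepend_case_nat mu_eq add.commute)
  finally show ?thesis .
qed

interpretation PP: pair_sigma_finite B01 SQ.S ..

lemma int_split:
  fixes f :: "seq \<Rightarrow> 'b::{banach, second_countable_topology}"
  assumes f: "integrable mu f"
  shows "integral\<^sup>L mu f = (integral\<^sup>L mu (\<lambda>x. f (prepend False x)) + integral\<^sup>L mu (\<lambda>x. f (prepend True x))) /\<^sub>R 2"
proof -
  have fS: "integrable SQ.S f" using f by (simp add: mu_eq)
  have fm[measurable]: "f \<in> borel_measurable SQ.S" using fS by auto
  have "integral\<^sup>L mu f = integral\<^sup>L (distr (B01 \<Otimes>\<^sub>M SQ.S) SQ.S (\<lambda>(s, \<omega>). case_nat s \<omega>)) f"
    by (simp add: SQ.PiM_iter mu_eq)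
  also have "\<dots> = integral\<^sup>L (B01 \<Otimes>\<^sub>M SQ.S) (\<lambda>x. f (case_nat (fst x) (snd x)))"
    by (subst integral_distr) (auto simp: split_beta')
  also have "\<dots> = (\<integral>s. \<integral>\<omega>. f (case_nat s \<omega>) \<partial>SQ.S \<partial>B01)"
  proof (subst PP.integral_fst'[symmetric])
    have "integrable (distr (B01 \<Otimes>\<^sub>M SQ.S) SQ.S (\<lambda>(s, \<omega>). case_nat s \<omega>)) f"
      using fS by (simp add: SQ.PiM_iter)
    then show "integrable (B01 \<Otimes>\<^sub>M SQ.S) (\<lambda>x. f (case_nat (fst x) (snd x)))"
      by (subst (asm) integrable_distr_eq) (auto simp: split_beta')
  qed auto
  also have "\<dots> = (integral\<^sup>L mu (\<lambda>x. f (prepend False x)) + integral\<^sup>L mu (\<lambda>x. f (prepend True x))) /\<^sub>R 2"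
    by (subst integral_measure_pmf[of UNIV]) (auto simp: UNIV_bool prepend_case_nat mu_eq scaleR_add_right add.commute)
  finally show ?thesis .
qed

lemma ennreal_half_top: "((x::ennreal) + y) / 2 < \<top> \<longleftrightarrow> x < \<top> \<and> y < \<top>"
  by (simp add: ennreal_divide_eq_top_iff less_top[symmetric] ennreal_add_eq_top)

lemma integrable_prepend:
  fixes f :: "seq \<Rightarrow> 'b::{banach, second_countable_topology}"
  assumes f: "integrable mu f"
  shows "integrable mu (\<lambda>x. f (prepend a x))"
proof -
  have fm[measurable]: "f \<in> borel_measurable mu" using f by auto
  have "(\<integral>\<^sup>+x. norm (f x) \<partial>mu) < \<infinity>" using f by (simp add: integrable_iff_bounded)
  then have "((\<integral>\<^sup>+x. norm (f (prepend False x)) \<partial>mu) + (\<integral>\<^sup>+x. norm (f (prepend True x)) \<partial>mu)) / 2 < \<infinity>"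
    by (subst (asm) nn_split) auto
  then have "(\<integral>\<^sup>+x. norm (f (prepend a x)) \<partial>mu) < \<infinity>"
    by (cases a) (auto simp: ennreal_half_top)
  then show ?thesis by (simp add: integrable_iff_bounded)
qed

lemma integrable_from_prepend:
  fixes f :: "seq \<Rightarrow> 'b::{banach, second_countable_topology}"
  assumes fm[measurable]: "f \<in> borel_measurable mu"
    and "integrable mu (\<lambda>x. f (prepend False x))" "integrable mu (\<lambda>x. f (prepend True x))"
  shows "integrable mu f"
  using assms by (simp add: integrable_iff_bounded nn_split[of "\<lambda>x. ennreal (norm (f x))"] ennreal_half_top)


interpretation MU: prob_space mu by (rule prob_mu)

lemma borel_measurable_cnj'[measurable (raw)]:
  "f \<in> borel_measurable M \<Longrightarrow> (\<lambda>x. cnj (f x)) \<in> borel_measurable M"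
  by (rule borel_measurable_continuous_on[OF continuous_on_cnj[OF continuous_on_id]])

lemma L2_iff: "f \<in> L2 \<longleftrightarrow> f \<in> borel_measurable mu \<and> integrable mu (\<lambda>x. (cmod (f x))\<^sup>2)"
  by (simp add: L2_def)

lemma cmod_add_sq: "(cmod (a + b))\<^sup>2 \<le> 2 * (cmod a)\<^sup>2 + 2 * (cmod b)\<^sup>2"
proof -
  have "cmod (a + b) \<le> cmod a + cmod b" by (rule norm_triangle_ineq)
  then have "(cmod (a + b))\<^sup>2 \<le> (cmod a + cmod b)\<^sup>2" by (simp add: power_mono)
  also have "\<dots> \<le> 2 * (cmod a)\<^sup>2 + 2 * (cmod b)\<^sup>2"
  proof -
    have "0 \<le> (cmod a - cmod b)\<^sup>2" by simp
    then show ?thesis unfolding power2_sum power2_diff by linarith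
  qed
  finally show ?thesis .
qed

lemma L2_add[intro]: assumes "f \<in> L2" "g \<in> L2" shows "(\<lambda>x. f x + g x) \<in> L2"
proof -
  have [measurable]: "f \<in> borel_measurable mu" "g \<in> borel_measurable mu" using assms by (auto simp: L2_iff)
  have "integrable mu (\<lambda>x. 2 * (cmod (f x))\<^sup>2 + 2 * (cmod (g x))\<^sup>2)"
    using assms by (auto simp: L2_iff)
  then have "integrable mu (\<lambda>x. (cmod (f x + g x))\<^sup>2)"
  proof (rule Bochner_Integration.integrable_bound)
    show "AE x in mu. norm ((cmod (f x + g x))\<^sup>2) \<le> norm (2 * (cmod (f x))\<^sup>2 + 2 * (cmod (g x))\<^sup>2)"
    proof (rule AE_I2)
      fix x
      have "norm ((cmod (f x + g x))\<^sup>2) = (cmod (f x + g x))\<^sup>2" by simp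
      also have "\<dots> \<le> 2 * (cmod (f x))\<^sup>2 + 2 * (cmod (g x))\<^sup>2" by (rule cmod_add_sq)
      also have "\<dots> = norm (2 * (cmod (f x))\<^sup>2 + 2 * (cmod (g x))\<^sup>2)" by simp
      finally show "norm ((cmod (f x + g x))\<^sup>2) \<le> norm (2 * (cmod (f x))\<^sup>2 + 2 * (cmod (g x))\<^sup>2)" .
    qed
  qed simp
  then show ?thesis by (auto simp: L2_iff)
qed

lemma L2_cmult[intro]: assumes "f \<in> L2" shows "(\<lambda>x. c * f x) \<in> L2"
  using assms by (auto simp: L2_iff norm_mult power_mult_distrib)

lemma L2_uminus[intro]: assumes "f \<in> L2" shows "(\<lambda>x. - f x) \<in> L2"
  using L2_cmult[OF assms, of "-1"] by simp

lemma L2_diff[intro]: assumes "f \<in> L2" "g \<in> L2" shows "(\<lambda>x. f x - g x) \<in> L2"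
  using L2_add[OF assms(1) L2_uminus[OF assms(2)]] by simp

lemma L2_sum[intro]: assumes "\<And>i. i \<in> I \<Longrightarrow> f i \<in> L2" shows "(\<lambda>x. \<Sum>i\<in>I. f i x) \<in> L2"
  using assms
proof (induction I rule: infinite_finite_induct)
  case (infinite A) then show ?case by (simp add: L2_iff)
next
  case empty then show ?case by (simp add: L2_iff)
next
  case (insert x F) then show ?case by (simp add: L2_add)
qed

lemma L2_bounded: assumes [measurable]: "f \<in> borel_measurable mu" and "\<And>x. cmod (f x) \<le> C"
  shows "f \<in> L2"
proof -
  have "integrable mu (\<lambda>x. (cmod (f x))\<^sup>2)"
  proof (rule MU.integrable_const_bound[where B="C\<^sup>2"])
    show "AE x in mu. norm ((cmod (f x))\<^sup>2) \<le> C\<^sup>2"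
      using assms(2) by (intro AE_I2) (simp add: power_mono)
  qed simp
  then show ?thesis by (simp add: L2_iff)
qed

lemma L2_prepend[intro]: assumes "f \<in> L2" shows "(\<lambda>x. f (prepend a x)) \<in> L2"
  using assms integrable_prepend[of "\<lambda>x. (cmod (f x))\<^sup>2" a] by (auto simp: L2_iff)

lemma prepend_shift[simp]: "shift (prepend a x) = x"
  by (simp add: shift_def prepend_def)

lemma prepend_0[simp]: "prepend a x 0 = a" by (simp add: prepend_def)
lemma prepend_Suc[simp]: "prepend a x (Suc n) = x n" by (simp add: prepend_def)

lemma shift_prepend_id: "prepend (x 0) (shift x) = x"
  by (auto simp: prepend_def shift_def fun_eq_iff)

lemma L2_shift[intro]: assumes "f \<in> L2" shows "(\<lambda>x. f (shift x)) \<in> L2"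
proof -
  have [measurable]: "f \<in> borel_measurable mu" using assms by (auto simp: L2_iff)
  have "integrable mu (\<lambda>x. (cmod (f (shift x)))\<^sup>2)"
    by (rule integrable_from_prepend) (use assms in \<open>auto simp: L2_iff\<close>)
  then show ?thesis by (auto simp: L2_iff)
qed

lemma L2_integrable_mult: assumes "f \<in> L2" "g \<in> L2" shows "integrable mu (\<lambda>x. f x * cnj (g x))"
proof -
  have [measurable]: "f \<in> borel_measurable mu" "g \<in> borel_measurable mu" using assms by (auto simp: L2_iff)
  have "integrable mu (\<lambda>x. (cmod (f x))\<^sup>2 + (cmod (g x))\<^sup>2)"
    using assms by (auto simp: L2_iff)
  then show ?thesis
  proof (rule Bochner_Integration.integrable_bound)
    show "AE x in mu. norm (f x * cnj (g x)) \<le> norm ((cmod (f x))\<^sup>2 + (cmod (g x))\<^sup>2)"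
    proof (rule AE_I2)
      fix x
      have "0 \<le> (cmod (f x) - cmod (g x))\<^sup>2" by simp
      then have "cmod (f x) * cmod (g x) \<le> (cmod (f x))\<^sup>2 + (cmod (g x))\<^sup>2"
        unfolding power2_diff using mult_nonneg_nonneg[OF norm_ge_zero norm_ge_zero, of "f x" "g x"] by linarith
      then show "norm (f x * cnj (g x)) \<le> norm ((cmod (f x))\<^sup>2 + (cmod (g x))\<^sup>2)"
        by (simp add: norm_mult)
    qed
  qed measurable
qed

lemma L2_integrable: assumes "f \<in> L2" shows "integrable mu f"
  using L2_integrable_mult[OF assms L2_bounded[of "\<lambda>_. 1" 1]] by simp

lemma complex_scaleR_half: "(z::complex) /\<^sub>R 2 = z / 2"
  by (simp add: scaleR_conv_of_real field_simps)

lemma inner_split: assumes "f \<in> L2" "g \<in> L2"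
  shows "inner_L2 f g = (inner_L2 (\<lambda>x. f (prepend False x)) (\<lambda>x. g (prepend False x))
       + inner_L2 (\<lambda>x. f (prepend True x)) (\<lambda>x. g (prepend True x))) / 2"
  unfolding inner_L2_def
  by (subst int_split[OF L2_integrable_mult[OF assms]]) (simp only: complex_scaleR_half)

definition NN :: "(seq \<Rightarrow> complex) \<Rightarrow> real" where
  "NN f = (\<integral>x. (cmod (f x))\<^sup>2 \<partial>mu)"

lemma NN_split: assumes "f \<in> L2"
  shows "NN f = (NN (\<lambda>x. f (prepend False x)) + NN (\<lambda>x. f (prepend True x))) / 2"
  unfolding NN_def using assms
  by (subst int_split) (auto simp: L2_iff)

lemma NN_nonneg: "NN f \<ge> 0" unfolding NN_def by simp

lemma NN_add_le: assumes "f \<in> L2" "g \<in> L2" shows "NN (\<lambda>x. f x + g x) \<le> 2 * NN f + 2 * NN g"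
proof -
  have "NN (\<lambda>x. f x + g x) \<le> (\<integral>x. 2 * (cmod (f x))\<^sup>2 + 2 * (cmod (g x))\<^sup>2 \<partial>mu)"
    unfolding NN_def
  proof (rule integral_mono)
    show "integrable mu (\<lambda>x. (cmod (f x + g x))\<^sup>2)" using L2_add[OF assms] by (simp add: L2_iff)
    show "integrable mu (\<lambda>x. 2 * (cmod (f x))\<^sup>2 + 2 * (cmod (g x))\<^sup>2)" using assms by (simp add: L2_iff)
  qed (rule cmod_add_sq)
  also have "\<dots> = 2 * NN f + 2 * NN g"
    using assms by (simp add: NN_def L2_iff)
  finally show ?thesis .
qed

lemma NN_cmult: "NN (\<lambda>x. c * f x) = (cmod c)\<^sup>2 * NN f"
  by (simp add: NN_def norm_mult power_mult_distrib)

lemma NN_minus_commute: "NN (\<lambda>x. f x - g x) = NN (\<lambda>x. g x - f x)"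
  by (simp add: NN_def norm_minus_commute)


lemma cyl_sets[measurable]: "cyl v \<in> sets mu"
proof -
  have "Measurable.pred mu (\<lambda>x. \<forall>i<length v. x i = v ! i)"
    unfolding mu_eq by measurable
  then have "{x \<in> space mu. \<forall>i<length v. x i = v ! i} \<in> sets mu" by (simp add: pred_def)
  then show ?thesis by (simp add: cyl_def)
qed

lemma chi_meas[measurable]: "chi v \<in> borel_measurable mu"
  unfolding chi_def by measurable

lemma chi_Nil[simp]: "chi [] x = 1" by (simp add: chi_def cyl_def)

lemma chi_prepend: "chi (a # v) (prepend b x) = (if a = b then chi v x else 0)"
proof -
  have "prepend b x \<in> cyl (a # v) \<longleftrightarrow> a = b \<and> x \<in> cyl v"
    unfolding cyl_def
    by (auto simp: less_Suc_eq_0_disj prepend_def)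
  then show ?thesis by (simp add: chi_def indicator_def)
qed

lemma chi_bound: "cmod (chi v x) \<le> 1" by (simp add: chi_def indicator_def)

lemma evec_meas[measurable]: "evec w \<in> borel_measurable mu"
  unfolding evec_def[abs_def] by measurable

lemma evec_Nil_prepend: "evec [] (prepend b x) = (if b then 1 else -1)"
  by (simp add: evec_def chi_prepend)

lemma powr_half_Suc: "(2::real) powr (real (Suc n) / 2) = sqrt 2 * 2 powr (real n / 2)"
proof -
  have "(2::real) powr (real (Suc n) / 2) = 2 powr (1/2) * 2 powr (real n / 2)"
    by (simp add: powr_add[symmetric] add_divide_distrib)
  then show ?thesis by (simp add: powr_half_sqrt)
qed

lemma powr_half_Suc': "complex_of_real ((2::real) powr ((1 + real n) / 2)) = sqrt 2 * 2 powr (real n / 2)"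
  using powr_half_Suc[of n] by simp

lemma evec_prepend: "evec (a # w) (prepend b x) = (if a = b then sqrt 2 else 0) * evec w x"
  by (simp add: evec_def chi_prepend powr_half_Suc')

lemma two_powr_neg_half: "(2::real) powr (-1/2) = 1 / sqrt 2"
  by (simp add: powr_minus_divide powr_half_sqrt[symmetric])

lemma two_powr_neg_half': "(2::real) powr - (1/2) = 1 / sqrt 2"
  using two_powr_neg_half by simp

lemma evec_L2: "evec w \<in> L2"
proof (rule L2_bounded)
  fix x
  have "cmod (chi (w @ [True]) x - chi (w @ [False]) x) \<le> 2"
    using norm_triangle_ineq4[of "chi (w @ [True]) x" "chi (w @ [False]) x"] chi_bound[of "w @ [True]" x] chi_bound[of "w @ [False]" x]
    by linarith
  then show "cmod (evec w x) \<le> 2 powr (real (length w) / 2) * 2"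
    by (simp add: evec_def norm_mult mult_left_mono)
qed measurable

definition hm :: "bool list option \<Rightarrow> seq \<Rightarrow> complex" where
  "hm s = (case s of None \<Rightarrow> (\<lambda>x. -1) | Some w \<Rightarrow> evec w)"

definition sg :: "bool \<Rightarrow> complex" where "sg b = (if b then -1 else 1)"

lemma hm_L2: "hm s \<in> L2"
  by (cases s) (auto simp: hm_def evec_L2 intro!: L2_bounded)

lemma ket0_prepend: "ket0 s (prepend b x) = sg b * hm s x"
proof (cases s)
  case None
  then show ?thesis
    by (cases b) (auto simp: hm_def sg_def e0eps_def e1eps_def chi_prepend two_powr_neg_half' field_simps)
next
  case (Some w)
  then show ?thesis using Some
    by (cases b) (auto simp: hm_def sg_def evec_prepend two_powr_neg_half' field_simps)
qed

lemma inner_cmult_left: "inner_L2 (\<lambda>x. c * f x) g = c * inner_L2 f g"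
  by (simp add: inner_L2_def mult.assoc)

lemma inner_cmult_right: "inner_L2 f (\<lambda>x. c * g x) = cnj c * inner_L2 f g"
  unfolding inner_L2_def by (simp add: mult.commute mult.left_commute)

lemma inner_zero_right[simp]: "inner_L2 f (\<lambda>x. 0) = 0"
  by (simp add: inner_L2_def)

lemma inner_zero_left[simp]: "inner_L2 (\<lambda>x. 0) f = 0"
  by (simp add: inner_L2_def)

lemma measure_mu_UNIV[simp]: "measure mu UNIV = 1"
  using MU.prob_space by simp

lemma inner_const[simp]: "inner_L2 (\<lambda>x. c) (\<lambda>x. d) = c * cnj d"
  by (simp add: inner_L2_def)

lemma inner_conj: "inner_L2 g f = cnj (inner_L2 f g)"
proof -
  have "(\<integral>x. cnj (f x * cnj (g x)) \<partial>mu) = cnj (\<integral>x. f x * cnj (g x) \<partial>mu)" by (rule Bochner_Integration.integral_cnj)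
  then show ?thesis by (simp add: inner_L2_def mult.commute)
qed

lemma sqrt2c[simp]: "complex_of_real (sqrt 2) * complex_of_real (sqrt 2) = 2"
  by (simp flip: of_real_mult)

lemma int_evec: "inner_L2 (evec w) (\<lambda>x. 1) = 0"
proof (induction w)
  case Nil
  show ?case
    by (subst inner_split) (auto intro!: evec_L2 L2_bounded simp: evec_Nil_prepend)
next
  case (Cons a w)
  show ?case
    by (subst inner_split) (use Cons in \<open>auto intro!: evec_L2 L2_bounded simp: evec_prepend inner_cmult_left\<close>)
qed

lemma int_evec'': "inner_L2 (evec w) (\<lambda>x. c) = 0"
  using inner_cmult_right[of "evec w" c "\<lambda>x. 1"] int_evec[of w] by simp

lemma int_evec': "inner_L2 (\<lambda>x. c) (evec w) = 0"
  using int_evec''[of w c] inner_conj[of "\<lambda>x. c" "evec w"] by simp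

lemma inner_evec: "inner_L2 (evec v) (evec w) = (if v = w then 1 else 0)"
proof (induction v arbitrary: w)
  case Nil
  show ?case
  proof (cases w)
    case Nil
    then show ?thesis
      by (subst inner_split) (auto intro!: evec_L2 simp: evec_Nil_prepend)
  next
    case (Cons b w')
    then show ?thesis
      by (subst inner_split) (auto intro!: evec_L2 simp: evec_Nil_prepend evec_prepend inner_cmult_right int_evec')
  qed
next
  case (Cons a v)
  show ?case
  proof (cases w)
    case Nil
    then show ?thesis
      by (subst inner_split) (auto intro!: evec_L2 simp: evec_Nil_prepend evec_prepend inner_cmult_left int_evec'')
  next
    case (Cons b w')
    then show ?thesis
      by (subst inner_split) (auto intro!: evec_L2 simp: evec_prepend inner_cmult_right inner_cmult_left Cons.IH)
  qed
qed

lemma inner_hm: "inner_L2 (hm s) (hm t) = (if s = t then 1 else 0)"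
  by (cases s; cases t) (auto simp: hm_def inner_evec int_evec' int_evec'')


lemma inner_sum_left:
  assumes "\<And>i. i \<in> I \<Longrightarrow> f i \<in> L2" "g \<in> L2"
  shows "inner_L2 (\<lambda>x. \<Sum>i\<in>I. f i x) g = (\<Sum>i\<in>I. inner_L2 (f i) g)"
  unfolding inner_L2_def sum_distrib_right
  by (rule Bochner_Integration.integral_sum) (use assms L2_integrable_mult in auto)

lemma inner_sum_right:
  assumes "\<And>i. i \<in> I \<Longrightarrow> f i \<in> L2" "g \<in> L2"
  shows "inner_L2 g (\<lambda>x. \<Sum>i\<in>I. f i x) = (\<Sum>i\<in>I. inner_L2 g (f i))"
  by (subst inner_conj) (simp add: inner_sum_left[OF assms] inner_conj[of g])

lemma inner_diff_left:
  assumes "f \<in> L2" "h \<in> L2" "g \<in> L2"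
  shows "inner_L2 (\<lambda>x. f x - h x) g = inner_L2 f g - inner_L2 h g"
  unfolding inner_L2_def left_diff_distrib
  by (rule Bochner_Integration.integral_diff) (use assms L2_integrable_mult in auto)

lemma inner_diff_right:
  assumes "f \<in> L2" "h \<in> L2" "g \<in> L2"
  shows "inner_L2 g (\<lambda>x. f x - h x) = inner_L2 g f - inner_L2 g h"
  by (subst inner_conj) (simp add: inner_diff_left[OF assms] inner_conj[of g])

lemma inner_self: "inner_L2 h h = complex_of_real (NN h)"
proof -
  have "\<And>x. h x * cnj (h x) = complex_of_real ((cmod (h x))\<^sup>2)"
    using complex_norm_square by simp
  then have "inner_L2 h h = (\<integral>x. complex_of_real ((cmod (h x))\<^sup>2) \<partial>mu)"
    unfolding inner_L2_def by presburger
  then show ?thesis unfolding NN_def by (simp only: integral_complex_of_real)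
qed

definition coef :: "(seq \<Rightarrow> complex) \<Rightarrow> bool list option \<Rightarrow> complex" where
  "coef g s = inner_L2 g (hm s)"

definition Ssum :: "bool list option set \<Rightarrow> (seq \<Rightarrow> complex) \<Rightarrow> seq \<Rightarrow> complex" where
  "Ssum F g x = (\<Sum>s\<in>F. coef g s * hm s x)"

lemma Ssum_L2: "Ssum F g \<in> L2"
  unfolding Ssum_def[abs_def] by (intro L2_sum L2_cmult hm_L2)

lemma hm_L2': "(\<lambda>x. c * hm s x) \<in> L2" by (intro L2_cmult hm_L2)

lemma mult_cnj_self: "c * cnj c = complex_of_real ((cmod c)\<^sup>2)"
  using complex_norm_square[of c] by simp

lemma cnj_mult_self: "cnj c * c = complex_of_real ((cmod c)\<^sup>2)"
  using mult_cnj_self[of c] by (simp only: mult.commute)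

lemma inner_g_S: assumes "g \<in> L2"
  shows "inner_L2 g (Ssum F g) = (\<Sum>s\<in>F. complex_of_real ((cmod (coef g s))\<^sup>2))"
proof -
  have "inner_L2 g (Ssum F g) = (\<Sum>s\<in>F. inner_L2 g (\<lambda>x. coef g s * hm s x))"
    unfolding Ssum_def[abs_def] by (rule inner_sum_right) (auto intro: hm_L2' assms)
  also have "\<dots> = (\<Sum>s\<in>F. cnj (coef g s) * coef g s)"
    by (simp only: inner_cmult_right coef_def)
  finally show ?thesis by (simp only: cnj_mult_self)
qed

lemma inner_S_g: assumes "g \<in> L2"
  shows "inner_L2 (Ssum F g) g = (\<Sum>s\<in>F. complex_of_real ((cmod (coef g s))\<^sup>2))"
  by (subst inner_conj) (simp add: inner_g_S[OF assms])

lemma inner_S_S: assumes "finite F"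
  shows "inner_L2 (Ssum F g) (Ssum F g) = (\<Sum>s\<in>F. complex_of_real ((cmod (coef g s))\<^sup>2))"
proof -
  have "inner_L2 (Ssum F g) (Ssum F g) = (\<Sum>s\<in>F. inner_L2 (\<lambda>x. coef g s * hm s x) (Ssum F g))"
    unfolding Ssum_def[abs_def] 
    by (rule inner_sum_left) (auto intro!: hm_L2' Ssum_L2[unfolded Ssum_def[abs_def]])
  also have "\<dots> = (\<Sum>s\<in>F. coef g s * (\<Sum>t\<in>F. inner_L2 (hm s) (\<lambda>x. coef g t * hm t x)))"
    unfolding inner_cmult_left Ssum_def[abs_def]
    by (rule sum.cong[OF refl], subst inner_sum_right) (auto intro!: hm_L2' hm_L2)
  also have "\<dots> = (\<Sum>s\<in>F. coef g s * (\<Sum>t\<in>F. cnj (coef g t) * (if s = t then 1 else 0)))"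
    by (simp only: inner_cmult_right inner_hm)
  also have "\<dots> = (\<Sum>s\<in>F. coef g s * cnj (coef g s))"
    using assms by (simp add: if_distrib cong: if_cong)
  finally show ?thesis by (simp only: mult_cnj_self)
qed

lemma bessel: assumes "g \<in> L2" "finite F"
  shows "NN (\<lambda>x. g x - Ssum F g x) = NN g - (\<Sum>s\<in>F. (cmod (coef g s))\<^sup>2)"
proof -
  have "complex_of_real (NN (\<lambda>x. g x - Ssum F g x)) = inner_L2 (\<lambda>x. g x - Ssum F g x) (\<lambda>x. g x - Ssum F g x)"
    by (simp add: inner_self)
  also have "\<dots> = inner_L2 g g - inner_L2 g (Ssum F g) - (inner_L2 (Ssum F g) g - inner_L2 (Ssum F g) (Ssum F g))"
    using assms Ssum_L2
    by (simp add: inner_diff_left inner_diff_right L2_diff)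
  also have "\<dots> = complex_of_real (NN g) - (\<Sum>s\<in>F. complex_of_real ((cmod (coef g s))\<^sup>2))"
    using assms by (simp only: inner_g_S inner_S_g inner_S_S inner_self[of g]) simp
  also have "\<dots> = complex_of_real (NN g - (\<Sum>s\<in>F. (cmod (coef g s))\<^sup>2))"
    by (simp only: of_real_diff of_real_sum)
  finally show ?thesis by (simp only: of_real_eq_iff)
qed

lemma NN_Ssum: assumes "finite F"
  shows "NN (Ssum F g) = (\<Sum>s\<in>F. (cmod (coef g s))\<^sup>2)"
proof -
  have "complex_of_real (NN (Ssum F g)) = complex_of_real (\<Sum>s\<in>F. (cmod (coef g s))\<^sup>2)"
    using inner_S_S[OF assms, of g] by (simp only: inner_self of_real_sum)
  then show ?thesis by (simp only: of_real_eq_iff)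
qed

lemma Ssum_contract: assumes "g \<in> L2" "finite F" shows "NN (Ssum F g) \<le> NN g"
  using bessel[OF assms] NN_Ssum[OF assms(2), of g] NN_nonneg[of "\<lambda>x. g x - Ssum F g x"] by linarith

lemma coef_diff: assumes "u \<in> L2" "v \<in> L2" shows "coef (\<lambda>x. u x - v x) s = coef u s - coef v s"
  unfolding coef_def by (rule inner_diff_left) (use assms hm_L2 in auto)

lemma Ssum_diff: assumes "u \<in> L2" "v \<in> L2" shows "Ssum F (\<lambda>x. u x - v x) x = Ssum F u x - Ssum F v x"
  unfolding Ssum_def using assms by (simp add: coef_diff left_diff_distrib sum_subtractf)

lemma coef_cmult: "coef (\<lambda>x. c * u x) s = c * coef u s"
  unfolding coef_def by (rule inner_cmult_left)

lemma Ssum_cmult: "Ssum F (\<lambda>x. c * u x) x = c * Ssum F u x"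
  unfolding Ssum_def by (simp add: coef_cmult sum_distrib_left mult.assoc)

lemma coef_add: assumes "u \<in> L2" "v \<in> L2" shows "coef (\<lambda>x. u x + v x) s = coef u s + coef v s"
  using coef_diff[OF assms(1) L2_uminus[OF assms(2)]] coef_cmult[of "-1" v s] by simp

lemma Ssum_add: assumes "u \<in> L2" "v \<in> L2" shows "Ssum F (\<lambda>x. u x + v x) x = Ssum F u x + Ssum F v x"
  unfolding Ssum_def using assms by (simp add: coef_add distrib_right sum.distrib)


definition Wn :: "nat \<Rightarrow> bool list set" where "Wn n = {w. length w < n}"
definition Fn :: "nat \<Rightarrow> bool list option set" where "Fn n = insert None (Some ` Wn n)"

definition Tn :: "nat \<Rightarrow> (seq \<Rightarrow> complex) \<Rightarrow> seq \<Rightarrow> complex" where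
  "Tn n g x = inner_L2 g (\<lambda>x. 1) + (\<Sum>w\<in>Wn n. inner_L2 g (evec w) * evec w x)"

lemma finite_Wn[simp]: "finite (Wn n)"
proof -
  have "Wn n \<subseteq> {xs. set xs \<subseteq> UNIV \<and> length xs \<le> n}" by (auto simp: Wn_def)
  then show ?thesis using finite_lists_length_le[of "UNIV :: bool set" n] finite_subset by auto
qed

lemma finite_Fn[simp]: "finite (Fn n)" by (simp add: Fn_def)

lemma Wn_0[simp]: "Wn 0 = {}" by (simp add: Wn_def)

lemma Wn_Suc: "Wn (Suc n) = insert [] ((\<lambda>(a, w). a # w) ` (UNIV \<times> Wn n))"
proof (rule set_eqI)
  fix w show "w \<in> Wn (Suc n) \<longleftrightarrow> w \<in> insert [] ((\<lambda>(a, w). a # w) ` (UNIV \<times> Wn n))"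
    by (cases w) (auto simp: Wn_def)
qed

lemma sum_Wn_Suc:
  "(\<Sum>w\<in>Wn (Suc n). h w) = h [] + (\<Sum>w\<in>Wn n. h (False # w) + h (True # w))"
proof -
  have inj: "inj_on (\<lambda>(a, w). a # w) (UNIV \<times> Wn n)" by (auto simp: inj_on_def)
  have "(\<Sum>w\<in>Wn (Suc n). h w) = h [] + (\<Sum>w\<in>(\<lambda>(a, w). a # w) ` (UNIV \<times> Wn n). h w)"
    unfolding Wn_Suc by (subst sum.insert) auto
  also have "(\<Sum>w\<in>(\<lambda>(a, w). a # w) ` (UNIV \<times> Wn n). h w) = (\<Sum>p\<in>UNIV \<times> Wn n. h (fst p # snd p))"
    by (subst sum.reindex[OF inj]) (simp add: split_beta)
  also have "\<dots> = (\<Sum>a\<in>UNIV. \<Sum>w\<in>Wn n. h (a # w))"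
    by (simp add: sum.cartesian_product split_beta)
  also have "\<dots> = (\<Sum>w\<in>Wn n. h (False # w) + h (True # w))"
    by (simp add: UNIV_bool sum.distrib)
  finally show ?thesis .
qed

lemma Ssum_Fn: "Ssum (Fn n) g x = Tn n g x"
proof -
  have "coef g None * hm None x = inner_L2 g (\<lambda>x. 1)"
    using inner_cmult_right[of g "-1" "\<lambda>x. 1"] by (simp add: coef_def hm_def)
  moreover have "(\<Sum>s\<in>Some ` Wn n. coef g s * hm s x) = (\<Sum>w\<in>Wn n. inner_L2 g (evec w) * evec w x)"
    by (subst sum.reindex) (auto simp: coef_def hm_def)
  ultimately show ?thesis
    unfolding Ssum_def Fn_def Tn_def by (subst sum.insert) auto
qed

lemma coef_cons: assumes "g \<in> L2"
  shows "inner_L2 g (evec (a # w)) = sqrt 2 / 2 * inner_L2 (\<lambda>z. g (prepend a z)) (evec w)"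
proof -
  have "inner_L2 g (evec (a # w)) = (inner_L2 (\<lambda>x. g (prepend False x)) (\<lambda>x. evec (a # w) (prepend False x))
       + inner_L2 (\<lambda>x. g (prepend True x)) (\<lambda>x. evec (a # w) (prepend True x))) / 2"
    by (rule inner_split[OF assms evec_L2])
  then show ?thesis by (cases a) (simp_all add: evec_prepend inner_cmult_right)
qed

lemma coef_nil: assumes "g \<in> L2"
  shows "inner_L2 g (evec []) = (inner_L2 (\<lambda>z. g (prepend True z)) (\<lambda>x. 1) - inner_L2 (\<lambda>z. g (prepend False z)) (\<lambda>x. 1)) / 2"
proof -
  have "inner_L2 (\<lambda>z. g (prepend False z)) (\<lambda>x. - 1) = - inner_L2 (\<lambda>z. g (prepend False z)) (\<lambda>x. 1)"
    using inner_cmult_right[of "\<lambda>z. g (prepend False z)" "-1" "\<lambda>x. 1"] by simp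
  then show ?thesis
    by (subst inner_split) (use assms in \<open>auto intro: evec_L2 simp: evec_Nil_prepend\<close>)
qed

lemma coef_one: assumes "g \<in> L2"
  shows "inner_L2 g (\<lambda>x. 1) = (inner_L2 (\<lambda>z. g (prepend False z)) (\<lambda>x. 1) + inner_L2 (\<lambda>z. g (prepend True z)) (\<lambda>x. 1)) / 2"
  by (subst inner_split) (use assms in \<open>auto intro: L2_bounded\<close>)

lemma Tn_Suc: assumes "g \<in> L2"
  shows "Tn (Suc n) g (prepend b y) = Tn n (\<lambda>z. g (prepend b z)) y"
proof -
  have cons: "inner_L2 g (evec (False # w)) * evec (False # w) (prepend b y) + inner_L2 g (evec (True # w)) * evec (True # w) (prepend b y)
      = inner_L2 (\<lambda>z. g (prepend b z)) (evec w) * evec w y" for w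
    using assms by (cases b) (simp_all add: coef_cons evec_prepend)
  have "Tn (Suc n) g (prepend b y) = inner_L2 g (\<lambda>x. 1) + inner_L2 g (evec []) * evec [] (prepend b y)
      + (\<Sum>w\<in>Wn n. inner_L2 (\<lambda>z. g (prepend b z)) (evec w) * evec w y)"
    unfolding Tn_def sum_Wn_Suc cons by simp
  also have "inner_L2 g (\<lambda>x. 1) + inner_L2 g (evec []) * evec [] (prepend b y) = inner_L2 (\<lambda>z. g (prepend b z)) (\<lambda>x. 1)"
    using assms by (cases b) (simp_all add: coef_nil coef_one evec_Nil_prepend field_simps)
  finally show ?thesis by (simp add: Tn_def)
qed

definition dep :: "nat \<Rightarrow> (seq \<Rightarrow> 'a) \<Rightarrow> bool" where
  "dep n f \<longleftrightarrow> (\<forall>x y. (\<forall>i<n. x i = y i) \<longrightarrow> f x = f y)"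

lemma Tn_dep: assumes "f \<in> L2" "dep n f" shows "Tn n f x = f x"
  using assms
proof (induction n arbitrary: f x)
  case 0
  then have "f = (\<lambda>_. f x)" by (auto simp: dep_def fun_eq_iff)
  then have "Tn 0 f x = Tn 0 (\<lambda>_. f x) x" by simp
  then show ?case by (simp add: Tn_def)
next
  case (Suc n)
  have "dep n (\<lambda>z. f (prepend (x 0) z))"
    unfolding dep_def
  proof (intro allI impI)
    fix y z :: seq assume yz: "\<forall>i<n. y i = z i"
    have "\<forall>i<Suc n. prepend (x 0) y i = prepend (x 0) z i"
    proof (intro allI impI)
      fix i assume "i < Suc n" then show "prepend (x 0) y i = prepend (x 0) z i"
        using yz by (cases i) auto
    qed
    then show "f (prepend (x 0) y) = f (prepend (x 0) z)"
      using Suc.prems(2) unfolding dep_def by blast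
  qed
  then have "Tn n (\<lambda>z. f (prepend (x 0) z)) (shift x) = f (prepend (x 0) (shift x))"
    using Suc.IH[of "\<lambda>z. f (prepend (x 0) z)"] Suc.prems(1) by blast
  then show ?case
    using Tn_Suc[OF Suc.prems(1), of n "x 0" "shift x"] by (simp add: shift_prepend_id)
qed

lemma Tn_L2: "Tn n g \<in> L2"
  using Ssum_L2[of "Fn n" g] by (simp add: Ssum_Fn[abs_def] Ssum_Fn)

lemma Tn_diff: assumes "u \<in> L2" "v \<in> L2" shows "Tn n (\<lambda>x. u x - v x) x = Tn n u x - Tn n v x"
  using Ssum_diff[OF assms, of "Fn n"] by (simp add: Ssum_Fn)

lemma Tn_add: assumes "u \<in> L2" "v \<in> L2" shows "Tn n (\<lambda>x. u x + v x) x = Tn n u x + Tn n v x"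
  using Ssum_add[OF assms, of "Fn n"] by (simp add: Ssum_Fn)

lemma Tn_cmult: "Tn n (\<lambda>x. c * u x) x = c * Tn n u x"
  using Ssum_cmult[of "Fn n" c u] by (simp add: Ssum_Fn)

lemma Tn_contract: assumes "u \<in> L2" shows "NN (Tn n u) \<le> NN u"
  using Ssum_contract[OF assms finite_Fn, of n] by (simp add: Ssum_Fn[abs_def])


definition good :: "(seq \<Rightarrow> complex) \<Rightarrow> bool" where
  "good u \<longleftrightarrow> u \<in> L2 \<and> (\<lambda>n. NN (\<lambda>x. u x - Tn n u x)) \<longlonglongrightarrow> 0"

lemma dep_mono: "dep n f \<Longrightarrow> n \<le> m \<Longrightarrow> dep m f"
  unfolding dep_def by auto

lemma good_dep: assumes "u \<in> L2" "dep n u" shows "good u"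
proof -
  have "eventually (\<lambda>m. NN (\<lambda>x. u x - Tn m u x) = 0) sequentially"
    unfolding eventually_sequentially
  proof (intro exI allI impI)
    fix m assume "n \<le> m"
    then have "\<And>x. Tn m u x = u x" using Tn_dep[OF assms(1) dep_mono[OF assms(2)]] by blast
    then show "NN (\<lambda>x. u x - Tn m u x) = 0" by (simp add: NN_def)
  qed
  then show ?thesis using assms(1) by (simp add: good_def tendsto_eventually)
qed

lemma NN_le_sandwich:
  assumes "\<And>n. NN (f n) \<le> a n" "a \<longlonglongrightarrow> 0"
  shows "(\<lambda>n. NN (f n)) \<longlonglongrightarrow> 0"
  by (rule tendsto_sandwich[of "\<lambda>_. 0" _ _ a]) (use assms NN_nonneg in auto)

lemma good_add: assumes "good u" "good v" shows "good (\<lambda>x. u x + v x)"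
proof -
  have L: "u \<in> L2" "v \<in> L2" using assms by (auto simp: good_def)
  have "(\<lambda>n. NN (\<lambda>x. (u x + v x) - Tn n (\<lambda>x. u x + v x) x)) \<longlonglongrightarrow> 0"
  proof (rule NN_le_sandwich)
    fix n
    have "NN (\<lambda>x. (u x + v x) - Tn n (\<lambda>x. u x + v x) x) = NN (\<lambda>x. (u x - Tn n u x) + (v x - Tn n v x))"
      by (simp add: Tn_add[OF L] algebra_simps)
    also have "\<dots> \<le> 2 * NN (\<lambda>x. u x - Tn n u x) + 2 * NN (\<lambda>x. v x - Tn n v x)"
      by (rule NN_add_le) (use L Tn_L2 in auto)
    finally show "NN (\<lambda>x. (u x + v x) - Tn n (\<lambda>x. u x + v x) x) \<le> 2 * NN (\<lambda>x. u x - Tn n u x) + 2 * NN (\<lambda>x. v x - Tn n v x)" .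
  next
    show "(\<lambda>n. 2 * NN (\<lambda>x. u x - Tn n u x) + 2 * NN (\<lambda>x. v x - Tn n v x)) \<longlonglongrightarrow> 0"
      using assms by (auto simp: good_def intro!: tendsto_eq_intros)
  qed
  then show ?thesis using L by (auto simp: good_def)
qed

lemma good_cmult: assumes "good u" shows "good (\<lambda>x. c * u x)"
proof -
  have L: "u \<in> L2" using assms by (auto simp: good_def)
  have "NN (\<lambda>x. c * u x - Tn n (\<lambda>x. c * u x) x) = (cmod c)\<^sup>2 * NN (\<lambda>x. u x - Tn n u x)" for n
    using NN_cmult[of c "\<lambda>x. u x - Tn n u x"] by (simp add: Tn_cmult right_diff_distrib)
  then show ?thesis using assms L
    by (auto simp: good_def intro!: tendsto_eq_intros)
qed

lemma good_zero: "good (\<lambda>x. 0)"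
  by (rule good_dep[of _ 0]) (auto simp: dep_def intro: L2_bounded)

lemma good_sum: assumes "\<And>i. i \<in> I \<Longrightarrow> good (f i)" shows "good (\<lambda>x. \<Sum>i\<in>I. f i x)"
  using assms
proof (induction I rule: infinite_finite_induct)
  case (infinite A) then show ?case by (simp add: good_zero)
next
  case empty then show ?case by (simp add: good_zero)
next
  case (insert x F) then show ?case by (simp add: good_add)
qed

lemma good_limit:
  assumes u: "u \<in> L2" and approx: "\<And>e. e > 0 \<Longrightarrow> \<exists>v. good v \<and> NN (\<lambda>x. u x - v x) < e"
  shows "good u"
  unfolding good_def
proof (intro conjI u LIMSEQ_I)
  fix r :: real assume r: "0 < r"
  obtain v where v: "good v" "NN (\<lambda>x. u x - v x) < r / 12" using approx[of "r / 12"] r by auto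
  have vL: "v \<in> L2" using v by (auto simp: good_def)
  from v(1) have lv: "(\<lambda>n. NN (\<lambda>x. v x - Tn n v x)) \<longlonglongrightarrow> 0" by (simp add: good_def)
  have r8: "0 < r / 8" using r by simp
  obtain N where N: "\<And>n. n \<ge> N \<Longrightarrow> norm (NN (\<lambda>x. v x - Tn n v x) - 0) < r / 8"
    using LIMSEQ_D[OF lv r8] by blast
  show "\<exists>no. \<forall>n\<ge>no. norm (NN (\<lambda>x. u x - Tn n u x) - 0) < r"
  proof (intro exI allI impI)
    fix n assume n: "n \<ge> N"
    have b: "NN (\<lambda>x. v x - Tn n v x) < r / 8" using N[OF n] NN_nonneg by simp
    have dL: "(\<lambda>x. u x - v x) \<in> L2" "(\<lambda>x. v x - u x) \<in> L2" "(\<lambda>x. v x - Tn n v x) \<in> L2"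
      using u vL Tn_L2 by auto
    have c: "NN (Tn n (\<lambda>x. v x - u x)) \<le> NN (\<lambda>x. u x - v x)"
      using Tn_contract[OF dL(2), of n] NN_minus_commute[of v u] by simp
    have eq: "(\<lambda>x. u x - Tn n u x) = (\<lambda>x. (u x - v x) + ((v x - Tn n v x) + Tn n (\<lambda>x. v x - u x) x))"
      by (simp add: Tn_diff[OF vL u] fun_eq_iff)
    have "NN (\<lambda>x. u x - Tn n u x) \<le> 2 * NN (\<lambda>x. u x - v x) + 2 * NN (\<lambda>x. (v x - Tn n v x) + Tn n (\<lambda>x. v x - u x) x)"
      unfolding eq by (rule NN_add_le) (use dL Tn_L2 in auto)
    also have "NN (\<lambda>x. (v x - Tn n v x) + Tn n (\<lambda>x. v x - u x) x) \<le> 2 * NN (\<lambda>x. v x - Tn n v x) + 2 * NN (Tn n (\<lambda>x. v x - u x))"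
      using NN_add_le[OF dL(3) Tn_L2] by simp
    finally have "NN (\<lambda>x. u x - Tn n u x) \<le> 2 * NN (\<lambda>x. u x - v x) + 2 * (2 * NN (\<lambda>x. v x - Tn n v x) + 2 * NN (Tn n (\<lambda>x. v x - u x)))"
      by simp
    moreover have "2 * NN (\<lambda>x. u x - v x) + 2 * (2 * NN (\<lambda>x. v x - Tn n v x) + 2 * NN (Tn n (\<lambda>x. v x - u x)))
        < 2 * (r / 12) + 2 * (2 * (r / 8) + 2 * (r / 12))"
      using b c v(2) by (intro add_less_le_mono mult_strict_left_mono add_less_le_mono mult_left_mono) auto
    ultimately have "NN (\<lambda>x. u x - Tn n u x) < r" by simp
    then show "norm (NN (\<lambda>x. u x - Tn n u x) - 0) < r" using NN_nonneg by simp
  qed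
qed


lemma ind_L2: "A \<in> sets mu \<Longrightarrow> (indicator A :: seq \<Rightarrow> complex) \<in> L2"
  by (rule L2_bounded[where C=1]) (auto simp: indicator_def)

lemma sets_mu_sigma: "sets mu = sigma_sets UNIV (prod_algebra UNIV (\<lambda>_. B01))"
  by (simp add: mu_def sets_PiM)

lemma good_indicator: assumes "A \<in> sets mu" shows "good (indicator A :: seq \<Rightarrow> complex)"
proof -
  have A: "A \<in> sigma_sets UNIV (prod_algebra UNIV (\<lambda>_. B01))" using assms sets_mu_sigma by simp
  have cl: "prod_algebra UNIV (\<lambda>_. B01) \<subseteq> Pow UNIV" by simp
  from Int_stable_prod_algebra cl A show ?thesis
  proof (induction rule: sigma_sets_induct_disjoint)
    case (basic A)
    then have As: "A \<in> sets mu" using sets_mu_sigma by auto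
    from basic obtain J E where A: "A = prod_emb UNIV (\<lambda>_. B01) J (\<Pi>\<^sub>E j\<in>J. E j)" "finite J"
      by (auto elim!: prod_algebraE)
    have mem: "x \<in> A \<longleftrightarrow> (\<forall>j\<in>J. x j \<in> E j)" for x
      using A(1) by (auto simp: prod_emb_iff)
    have "dep (Suc (Max J)) (indicator A :: seq \<Rightarrow> complex)"
      unfolding dep_def
    proof (intro allI impI)
      fix x y :: seq assume xy: "\<forall>i<Suc (Max J). x i = y i"
      have "\<forall>j\<in>J. x j = y j"
        using xy A(2) by (auto simp: le_imp_less_Suc)
      then have "x \<in> A \<longleftrightarrow> y \<in> A" by (simp add: mem)
      then show "(indicator A x :: complex) = indicator A y" by (simp add: indicator_def)
    qed
    then show ?case by (rule good_dep[OF ind_L2[OF As]])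
  next
    case empty
    show ?case using good_zero by simp
  next
    case (compl A)
    then have As: "A \<in> sets mu" using sets_mu_sigma by auto
    have "good (\<lambda>x. 1 + (-1) * (indicator A x :: complex))"
      by (rule good_add[OF good_dep[of _ 0] good_cmult[OF compl.IH]]) (auto simp: dep_def intro: L2_bounded)
    moreover have "(\<lambda>x. 1 + (-1) * (indicator A x :: complex)) = indicator (UNIV - A)"
      by (auto simp: indicator_def fun_eq_iff)
    ultimately show ?case by simp
  next
    case (union A)
    have As: "A i \<in> sets mu" for i using union.hyps(2) sets_mu_sigma by auto
    let ?U = "\<Union>i. A i"
    let ?A = "\<lambda>N. \<Union>i\<in>{..<N}. A i"
    have Us: "?U \<in> sets mu" using As by auto
    have AsN: "?A N \<in> sets mu" for N using As by auto
    have lim: "(\<lambda>N. measure mu (?A N)) \<longlonglongrightarrow> measure mu (\<Union>N. ?A N)"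
    proof (rule MU.finite_Lim_measure_incseq)
      show "range ?A \<subseteq> sets mu" using AsN by auto
      show "incseq ?A" unfolding incseq_def by (intro allI impI UN_mono) auto
    qed
    have UU: "(\<Union>N. ?A N) = ?U" by auto
    show ?case
    proof (rule good_limit[OF ind_L2[OF Us]])
      fix e :: real assume e: "e > 0"
      from lim[unfolded UU] obtain N where N: "norm (measure mu (?A N) - measure mu ?U) < e"
        using LIMSEQ_D[OF _ e] by blast
      have gv: "good (indicator (?A N) :: seq \<Rightarrow> complex)"
      proof -
        have "good (\<lambda>x. \<Sum>i\<in>{..<N}. (indicator (A i) x :: complex))"
          by (rule good_sum) (use union.IH in auto)
        moreover have "(\<lambda>x. \<Sum>i\<in>{..<N}. (indicator (A i) x :: complex)) = indicator (?A N)"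
          using union.hyps(1)
          by (auto simp: fun_eq_iff disjoint_family_on_def intro!: indicator_UN_disjoint[symmetric])
        ultimately show ?thesis by simp
      qed
      have sub: "?A N \<subseteq> ?U" by auto
      have "(\<lambda>x. (cmod ((indicator ?U x :: complex) - indicator (?A N) x))\<^sup>2) = indicator (?U - ?A N)"
        using sub by (auto simp: fun_eq_iff indicator_def)
      then have "NN (\<lambda>x. (indicator ?U x :: complex) - indicator (?A N) x) = measure mu (?U - ?A N)"
        by (simp add: NN_def)
      also have "\<dots> = measure mu ?U - measure mu (?A N)"
        by (rule MU.finite_measure_Diff[OF Us AsN sub])
      also have "\<dots> < e" using N by simp
      finally show "\<exists>v. good v \<and> NN (\<lambda>x. (indicator ?U x :: complex) - v x) < e"
        using gv by blast
    qed
  qed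
qed

lemma ind_scaleR: "(indicator X x :: real) *\<^sub>R (y::complex) = y * indicator X x"
  by (cases "x \<in> X") auto

lemma good_simple: assumes "simple_function mu s" shows "good (s :: seq \<Rightarrow> complex)"
proof -
  have rep: "s x = (\<Sum>y\<in>s ` UNIV. y * indicator (s -` {y}) x)" for x
    using simple_function_indicator_representation_banach[OF assms, of x]
    unfolding ind_scaleR space_mu Int_UNIV_right by blast
  have eq: "s = (\<lambda>x. \<Sum>y\<in>s ` UNIV. y * indicator (s -` {y}) x)" by (rule ext) (rule rep)
  have pre: "s -` {y} \<in> sets mu" if "y \<in> s ` UNIV" for y
    using assms that unfolding simple_function_def by (auto simp: space_mu)
  have "good (\<lambda>x. \<Sum>y\<in>s ` UNIV. y * indicator (s -` {y}) x)"
  proof (rule good_sum)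
    fix y assume "y \<in> s ` UNIV"
    then show "good (\<lambda>x. y * indicator (s -` {y}) x)" by (intro good_cmult good_indicator pre)
  qed
  then show ?thesis by (rule subst[OF eq[symmetric], where P=good])
qed

lemma good_all: assumes u: "u \<in> L2" shows "good u"
proof -
  have um[measurable]: "u \<in> borel_measurable mu" using u by (simp add: L2_iff)
  obtain F where F: "\<And>i. simple_function mu (F i)" "\<And>x. (\<lambda>i. F i x) \<longlonglongrightarrow> u x"
    "\<And>i x. dist (F i x) 0 \<le> 2 * dist (u x) 0"
    using borel_measurable_implies_sequence_metric[OF um, of 0] by auto
  have Fm[measurable]: "F i \<in> borel_measurable mu" for i
    using F(1) by (rule borel_measurable_simple_function)
  have lim: "(\<lambda>i. integral\<^sup>L mu (\<lambda>x. (cmod (u x - F i x))\<^sup>2)) \<longlonglongrightarrow> integral\<^sup>L mu (\<lambda>x. 0::real)"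
  proof (rule integral_dominated_convergence[where w="\<lambda>x. 9 * (cmod (u x))\<^sup>2"])
    show "integrable mu (\<lambda>x. 9 * (cmod (u x))\<^sup>2)" using u by (simp add: L2_iff)
    show "AE x in mu. (\<lambda>i. (cmod (u x - F i x))\<^sup>2) \<longlonglongrightarrow> 0"
    proof (rule AE_I2)
      fix x
      have "(\<lambda>i. u x - F i x) \<longlonglongrightarrow> u x - u x" by (intro tendsto_intros F(2))
      then have "(\<lambda>i. (cmod (u x - F i x))) \<longlonglongrightarrow> 0" by (simp add: tendsto_norm_zero_iff)
      then show "(\<lambda>i. (cmod (u x - F i x))\<^sup>2) \<longlonglongrightarrow> 0" using tendsto_power[of _ 0 _ 2] by fastforce
    qed
    show "AE x in mu. norm ((cmod (u x - F i x))\<^sup>2) \<le> 9 * (cmod (u x))\<^sup>2" for i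
    proof (rule AE_I2)
      fix x
      have "cmod (u x - F i x) \<le> cmod (u x) + cmod (F i x)" by (rule norm_triangle_ineq4)
      also have "\<dots> \<le> 3 * cmod (u x)" using F(3)[of i x] by (simp add: dist_norm)
      finally have "(cmod (u x - F i x))\<^sup>2 \<le> (3 * cmod (u x))\<^sup>2" by (rule power_mono) simp
      moreover have "(3 * cmod (u x))\<^sup>2 = 9 * (cmod (u x))\<^sup>2" by (simp add: power2_eq_square)
      ultimately show "norm ((cmod (u x - F i x))\<^sup>2) \<le> 9 * (cmod (u x))\<^sup>2" by simp
    qed
  qed measurable
  show ?thesis
  proof (rule good_limit[OF u])
    fix e :: real assume e: "e > 0"
    from lim have "(\<lambda>i. NN (\<lambda>x. u x - F i x)) \<longlonglongrightarrow> 0" by (simp add: NN_def)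
    then obtain i where "norm (NN (\<lambda>x. u x - F i x) - 0) < e" using LIMSEQ_D[OF _ e] by blast
    then have "NN (\<lambda>x. u x - F i x) < e" using NN_nonneg by simp
    moreover have "good (F i)" by (rule good_simple[OF F(1)])
    ultimately show "\<exists>v. good v \<and> NN (\<lambda>x. u x - v x) < e" by blast
  qed
qed


lemma sqrt_half_sq: "complex_of_real (1 / sqrt 2) * complex_of_real (1 / sqrt 2) = 1 / 2"
  by (simp flip: of_real_mult)

lemma comm_eq: "commBBdag \<phi> x = \<phi> x / 2 - ruelle \<phi> (shift x) / 2"
proof -
  have a: "opB (opBdag \<phi>) x = complex_of_real (1 / sqrt 2) * complex_of_real (1 / sqrt 2) * \<phi> x"
    by (simp add: opB_def opBdag_def ruelle_def koopman_def field_simps)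
  have b: "opBdag (opB \<phi>) x = complex_of_real (1 / sqrt 2) * complex_of_real (1 / sqrt 2) * ruelle \<phi> (shift x)"
    by (simp add: opB_def opBdag_def koopman_def)
  show ?thesis unfolding commBBdag_def a b sqrt_half_sq by simp
qed

lemma two_comm: "2 * commBBdag \<phi> x = \<phi> x - ruelle \<phi> (shift x)"
  by (simp add: comm_eq field_simps)

lemma ruelle_L2: assumes "\<phi> \<in> L2" shows "ruelle \<phi> \<in> L2"
proof -
  have "(\<lambda>x. (1/2) * (\<phi> (prepend False x) + \<phi> (prepend True x))) \<in> L2"
    using assms by (intro L2_cmult L2_add L2_prepend)
  moreover have "ruelle \<phi> = (\<lambda>x. (1/2) * (\<phi> (prepend False x) + \<phi> (prepend True x)))"
    by (simp add: ruelle_def fun_eq_iff)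
  ultimately show ?thesis by simp
qed

lemma KL_L2: assumes "\<phi> \<in> L2" shows "(\<lambda>x. ruelle \<phi> (shift x)) \<in> L2"
  using L2_shift[OF ruelle_L2[OF assms]] .

lemma twocomm_L2: assumes "\<phi> \<in> L2" shows "(\<lambda>x. 2 * commBBdag \<phi> x) \<in> L2"
  unfolding two_comm using assms KL_L2[OF assms] by (rule L2_diff)

lemma comm_L2: assumes "\<phi> \<in> L2" shows "commBBdag \<phi> \<in> L2"
  using L2_cmult[OF twocomm_L2[OF assms], of "1/2"] by simp

lemma ruelle_twocomm: "ruelle (\<lambda>y. 2 * commBBdag \<phi> y) x = 0"
  unfolding two_comm by (simp add: ruelle_def field_simps)

lemma inner_add_right:
  assumes "f \<in> L2" "a \<in> L2" "b \<in> L2"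
  shows "inner_L2 f (\<lambda>x. a x + b x) = inner_L2 f a + inner_L2 f b"
  unfolding inner_L2_def by (simp add: distrib_left Bochner_Integration.integral_add L2_integrable_mult assms)

lemma inner_AE_zero: assumes "AE x in mu. h x = 0" shows "inner_L2 f h = 0"
  unfolding inner_L2_def by (rule integral_eq_zero_AE) (use assms in auto)

lemma part_c:
  assumes \<phi>: "\<phi> \<in> L2" and g: "g \<in> L2" and gz: "AE x in mu. ruelle g x = 0"
  shows "inner_L2 (\<lambda>x. \<phi> x - 2 * commBBdag \<phi> x) g = 0"
proof -
  have eq: "(\<lambda>x. \<phi> x - 2 * commBBdag \<phi> x) = (\<lambda>x. ruelle \<phi> (shift x))"
    by (simp add: two_comm fun_eq_iff)
  have "inner_L2 (\<lambda>x. ruelle \<phi> (shift x)) g = (inner_L2 (ruelle \<phi>) (\<lambda>x. g (prepend False x)) + inner_L2 (ruelle \<phi>) (\<lambda>x. g (prepend True x))) / 2"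
    by (subst inner_split) (use KL_L2[OF \<phi>] g in auto)
  also have "\<dots> = inner_L2 (ruelle \<phi>) (\<lambda>x. (1/2) * (g (prepend False x) + g (prepend True x)))"
  proof -
    have "inner_L2 (ruelle \<phi>) (\<lambda>x. (1/2) * (g (prepend False x) + g (prepend True x)))
        = cnj (1/2) * (inner_L2 (ruelle \<phi>) (\<lambda>x. g (prepend False x)) + inner_L2 (ruelle \<phi>) (\<lambda>x. g (prepend True x)))"
      by (simp only: inner_cmult_right inner_add_right[OF ruelle_L2[OF \<phi>] L2_prepend[OF g] L2_prepend[OF g]])
    then show ?thesis by (simp only: complex_cnj_divide complex_cnj_one complex_cnj_numeral) (simp add: field_simps)
  qed
  also have "\<dots> = inner_L2 (ruelle \<phi>) (ruelle g)"
    by (simp add: ruelle_def[abs_def])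
  also have "\<dots> = 0" by (rule inner_AE_zero[OF gz])
  finally show ?thesis unfolding eq .
qed

lemma sg_meas[measurable]: "(\<lambda>x. sg (x 0)) \<in> borel_measurable mu"
proof -
  have "(\<lambda>x. sg (x 0)) = (\<lambda>x. if x 0 then -1 else 1)" by (simp add: sg_def fun_eq_iff)
  moreover have "(\<lambda>x::seq. if x 0 then (-1::complex) else 1) \<in> borel_measurable mu"
    unfolding mu_eq by measurable
  ultimately show ?thesis by simp
qed

lemma ket0_rep: "ket0 s x = sg (x 0) * hm s (shift x)"
  using ket0_prepend[of s "x 0" "shift x"] by (simp add: shift_prepend_id)

lemma ket0_L2: "ket0 s \<in> L2"
proof -
  have hm: "hm s \<in> L2" by (rule hm_L2)
  have [measurable]: "hm s \<in> borel_measurable mu" using hm by (simp add: L2_iff)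
  have "(\<lambda>x. sg (x 0) * hm s (shift x)) \<in> L2"
    unfolding L2_iff
  proof
    show "(\<lambda>x. sg (x 0) * hm s (shift x)) \<in> borel_measurable mu" by measurable
    have "integrable mu (\<lambda>x. (cmod (hm s (shift x)))\<^sup>2)" using L2_shift[OF hm] by (simp add: L2_iff)
    moreover have "(cmod (sg (x 0) * hm s (shift x)))\<^sup>2 = (cmod (hm s (shift x)))\<^sup>2" for x
      by (simp add: sg_def norm_mult)
    ultimately show "integrable mu (\<lambda>x. (cmod (sg (x 0) * hm s (shift x)))\<^sup>2)" by simp
  qed
  moreover have "ket0 s = (\<lambda>x. sg (x 0) * hm s (shift x))" by (simp add: ket0_rep fun_eq_iff)
  ultimately show ?thesis by simp
qed

definition gfun :: "(seq \<Rightarrow> complex) \<Rightarrow> seq \<Rightarrow> complex" where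
  "gfun \<phi> x = (1/2) * (\<phi> (prepend False x) - \<phi> (prepend True x))"

lemma gfun_L2: "\<phi> \<in> L2 \<Longrightarrow> gfun \<phi> \<in> L2"
  unfolding gfun_def[abs_def] by (intro L2_cmult L2_diff L2_prepend)

lemma coef_rel: assumes \<phi>: "\<phi> \<in> L2" shows "inner_L2 \<phi> (ket0 s) = coef (gfun \<phi>) s"
proof -
  have s1: "inner_L2 \<phi> (ket0 s) = (inner_L2 (\<lambda>x. \<phi> (prepend False x)) (\<lambda>x. ket0 s (prepend False x))
      + inner_L2 (\<lambda>x. \<phi> (prepend True x)) (\<lambda>x. ket0 s (prepend True x))) / 2"
    by (rule inner_split[OF \<phi> ket0_L2])
  have k: "(\<lambda>x. ket0 s (prepend b x)) = (\<lambda>x. sg b * hm s x)" for b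
    by (rule ext) (rule ket0_prepend)
  have i: "inner_L2 f (\<lambda>x. ket0 s (prepend b x)) = cnj (sg b) * inner_L2 f (hm s)" for f b
    unfolding k by (rule inner_cmult_right)
  have s2: "inner_L2 \<phi> (ket0 s) = (inner_L2 (\<lambda>x. \<phi> (prepend False x)) (hm s) - inner_L2 (\<lambda>x. \<phi> (prepend True x)) (hm s)) / 2"
    unfolding s1 i by (simp add: sg_def)
  have s3: "coef (gfun \<phi>) s = (1/2) * (inner_L2 (\<lambda>x. \<phi> (prepend False x)) (hm s) - inner_L2 (\<lambda>x. \<phi> (prepend True x)) (hm s))"
    unfolding coef_def gfun_def[abs_def] inner_cmult_left
    by (subst inner_diff_left) (rule L2_prepend[OF \<phi>], rule L2_prepend[OF \<phi>], rule hm_L2, rule refl)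
  show ?thesis unfolding s2 s3 by simp
qed

lemma DF_prepend: assumes \<phi>: "\<phi> \<in> L2"
  shows "commBBdag \<phi> (prepend b y) - (1/2) * (\<Sum>w\<in>F. inner_L2 \<phi> (ket0 w) * ket0 w (prepend b y))
    = (1/2) * sg b * (gfun \<phi> y - Ssum F (gfun \<phi>) y)"
proof -
  have "(\<Sum>w\<in>F. inner_L2 \<phi> (ket0 w) * ket0 w (prepend b y)) = sg b * Ssum F (gfun \<phi>) y"
    by (simp add: coef_rel[OF \<phi>] ket0_prepend Ssum_def sum_distrib_left mult_ac)
  moreover have "commBBdag \<phi> (prepend b y) = (1/2) * sg b * gfun \<phi> y"
    by (cases b) (simp_all add: comm_eq sg_def gfun_def ruelle_def field_simps)
  ultimately show ?thesis by (simp add: algebra_simps)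
qed

lemma part_a: assumes \<phi>: "\<phi> \<in> L2"
  shows "dist_L2_sq (commBBdag \<phi>) (\<lambda>x. (1/2) * (\<Sum>w\<in>F. inner_L2 \<phi> (ket0 w) * ket0 w x))
     = (1/4) * NN (\<lambda>x. gfun \<phi> x - Ssum F (gfun \<phi>) x)"
proof -
  let ?D = "\<lambda>x. commBBdag \<phi> x - (1/2) * (\<Sum>w\<in>F. inner_L2 \<phi> (ket0 w) * ket0 w x)"
  have DL: "?D \<in> L2"
    using comm_L2[OF \<phi>] by (intro L2_diff L2_cmult L2_sum ket0_L2)
  have hb: "NN (\<lambda>x. ?D (prepend b x)) = (1/4) * NN (\<lambda>x. gfun \<phi> x - Ssum F (gfun \<phi>) x)" for b
  proof -
    have "NN (\<lambda>x. ?D (prepend b x)) = NN (\<lambda>x. ((1/2) * sg b) * (gfun \<phi> x - Ssum F (gfun \<phi>) x))"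
      by (simp only: DF_prepend[OF \<phi>])
    also have "\<dots> = (cmod ((1/2) * sg b))\<^sup>2 * NN (\<lambda>x. gfun \<phi> x - Ssum F (gfun \<phi>) x)"
      by (rule NN_cmult)
    finally show ?thesis by (simp add: sg_def norm_mult power2_eq_square)
  qed
  have "dist_L2_sq (commBBdag \<phi>) (\<lambda>x. (1/2) * (\<Sum>w\<in>F. inner_L2 \<phi> (ket0 w) * ket0 w x)) = NN ?D"
    by (simp add: dist_L2_sq_def NN_def)
  also have "\<dots> = (NN (\<lambda>x. ?D (prepend False x)) + NN (\<lambda>x. ?D (prepend True x))) / 2"
    by (rule NN_split[OF DL])
  finally show ?thesis by (simp only: hb) simp
qed

lemma conv_g: assumes g: "g \<in> L2"
  shows "((\<lambda>F. NN (\<lambda>x. g x - Ssum F g x)) \<longlongrightarrow> 0) (finite_subsets_at_top UNIV)"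
proof (rule tendstoI)
  fix e :: real assume e: "e > 0"
  from good_all[OF g] have "(\<lambda>n. NN (\<lambda>x. g x - Tn n g x)) \<longlonglongrightarrow> 0" by (simp add: good_def)
  then obtain n where n: "norm (NN (\<lambda>x. g x - Tn n g x) - 0) < e" using LIMSEQ_D[OF _ e] by blast
  show "eventually (\<lambda>F. dist (NN (\<lambda>x. g x - Ssum F g x)) 0 < e) (finite_subsets_at_top UNIV)"
    unfolding eventually_finite_subsets_at_top
  proof (intro exI conjI allI impI)
    show "finite (Fn n)" by simp
    show "Fn n \<subseteq> UNIV" by simp
    fix Y assume Y: "finite Y \<and> Fn n \<subseteq> Y \<and> Y \<subseteq> UNIV"
    have "NN (\<lambda>x. g x - Ssum Y g x) = NN g - (\<Sum>s\<in>Y. (cmod (coef g s))\<^sup>2)"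
      using bessel[OF g] Y by blast
    also have "\<dots> \<le> NN g - (\<Sum>s\<in>Fn n. (cmod (coef g s))\<^sup>2)"
      using sum_mono2[of Y "Fn n" "\<lambda>s. (cmod (coef g s))\<^sup>2"] Y by auto
    also have "\<dots> = NN (\<lambda>x. g x - Tn n g x)"
      using bessel[OF g finite_Fn, of n] by (simp add: Ssum_Fn)
    finally have "NN (\<lambda>x. g x - Ssum Y g x) < e" using n NN_nonneg by simp
    then show "dist (NN (\<lambda>x. g x - Ssum Y g x)) 0 < e" using NN_nonneg by simp
  qed
qed

theorem proposition3p5:
  shows "(\<forall>\<phi>\<in>L2.
            ((\<lambda>F. dist_L2_sq (commBBdag \<phi>)
                  (\<lambda>x. (1/2) * (\<Sum>w\<in>F. inner_L2 \<phi> (ket0 w) * ket0 w x)))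
              \<longlongrightarrow> 0) (finite_subsets_at_top UNIV))
       \<and> (\<forall>\<phi>\<in>L2.
            (\<lambda>x. 2 * commBBdag \<phi> x) \<in> L2
          \<and> (AE x in mu. ruelle (\<lambda>y. 2 * commBBdag \<phi> y) x = 0)
          \<and> (\<forall>g\<in>L2. (AE x in mu. ruelle g x = 0) \<longrightarrow>
                inner_L2 (\<lambda>x. \<phi> x - 2 * commBBdag \<phi> x) g = 0))"
proof (intro conjI ballI impI)
  fix \<phi> assume \<phi>: "\<phi> \<in> L2"
  have "((\<lambda>F. (1/4) * NN (\<lambda>x. gfun \<phi> x - Ssum F (gfun \<phi>) x)) \<longlongrightarrow> (1/4) * 0) (finite_subsets_at_top UNIV)"
    by (rule tendsto_mult_left[OF conv_g[OF gfun_L2[OF \<phi>]]])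
  then have "((\<lambda>F. (1/4) * NN (\<lambda>x. gfun \<phi> x - Ssum F (gfun \<phi>) x)) \<longlongrightarrow> 0) (finite_subsets_at_top UNIV)"
    by (simp only: mult_zero_right)
  then show "((\<lambda>F. dist_L2_sq (commBBdag \<phi>)
                  (\<lambda>x. (1/2) * (\<Sum>w\<in>F. inner_L2 \<phi> (ket0 w) * ket0 w x)))
              \<longlongrightarrow> 0) (finite_subsets_at_top UNIV)"
    by (simp only: part_a[OF \<phi>])
next
  fix \<phi> assume \<phi>: "\<phi> \<in> L2"
  show "(\<lambda>x. 2 * commBBdag \<phi> x) \<in> L2" by (rule twocomm_L2[OF \<phi>])
  show "AE x in mu. ruelle (\<lambda>y. 2 * commBBdag \<phi> y) x = 0" by (simp add: ruelle_twocomm)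
  fix g assume "g \<in> L2" "AE x in mu. ruelle g x = 0"
  then show "inner_L2 (\<lambda>x. \<phi> x - 2 * commBBdag \<phi> x) g = 0" by (rule part_c[OF \<phi>])
qed


end
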